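(* Let $(\mathbf H\oplus\mathbf V,\bullet)$ be the Lie group with product $(h,v)\bullet(h',v')=(h+h',\ \rho(h)v'+v)$, where $\rho:\mathbf H\to GL(\mathbf V)$ is a representation of the additive group $\mathbf H$. Let $\pi$ be a multiplicative Poisson bivector field on this group (i.e. a Poisson–Lie structure), and let $\pi^{ij}(h,v)$ denote its components with respect to linear coordinates $(h^k)$ on $\mathbf H$ and $(v^l)$ on $\mathbf V$. Then for every $k$, the bivector field with components $\partial\pi^{ij}/\partial h^k$ is left-invariant, and for every $l$, the bivector field with components $\partial\pi^{ij}/\partial v^l$ is right-invariant on the group.
   Context: $\mathbf H,\mathbf V$ are finite-dimensional real vector spaces, $\mathbf H$ regarded as a commutative group under addition. In these linear coordinates, for every $h'\in\mathbf H$ the constant vector field $(h',0)$ is left-invariant, and for every $v'\in\mathbf V$ the constant vector field $(0,v')$ is right-invariant. *)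

theory Defs
  imports "HOL-Analysis.Analysis"
begin

definition pd :: "'a::euclidean_space \<Rightarrow> ('a \<Rightarrow> real) \<Rightarrow> 'a \<Rightarrow> real" where
  "pd b f x = frechet_derivative f (at x) b"

fun Ck :: "nat \<Rightarrow> ('a::euclidean_space \<Rightarrow> real) \<Rightarrow> bool" where
  "Ck 0 f = continuous_on UNIV f"
| "Ck (Suc n) f = ((\<forall>x. f differentiable (at x)) \<and> (\<forall>b\<in>Basis. Ck n (pd b f)))"

definition smooth :: "('a::euclidean_space \<Rightarrow> real) \<Rightarrow> bool" where
  "smooth f \<longleftrightarrow> (\<forall>n. Ck n f)"

text \<open>Coordinates on H \<oplus> V are indexed by 'm + 'n: Inl k is h^k, Inr l is v^l.\<close>

fun cvec :: "('m::finite + 'n::finite) \<Rightarrow> (real^'m) \<times> (real^'n)" where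
  "cvec (Inl k) = (axis k 1, 0)"
| "cvec (Inr l) = (0, axis l 1)"

fun coord :: "('m::finite + 'n::finite) \<Rightarrow> (real^'m) \<times> (real^'n) \<Rightarrow> real" where
  "coord (Inl k) p = fst p $ k"
| "coord (Inr l) p = snd p $ l"

definition pdc :: "('m::finite + 'n::finite) \<Rightarrow> ((real^'m) \<times> (real^'n) \<Rightarrow> real)
    \<Rightarrow> (real^'m) \<times> (real^'n) \<Rightarrow> real" where
  "pdc a f x = pd (cvec a) f x"

definition gmult :: "(real^'m::finite \<Rightarrow> real^'n::finite^'n) \<Rightarrow> (real^'m) \<times> (real^'n)
    \<Rightarrow> (real^'m) \<times> (real^'n) \<Rightarrow> (real^'m) \<times> (real^'n)" where
  "gmult \<rho> g g' = (fst g + fst g', \<rho> (fst g) *v snd g' + snd g)"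

definition smooth_rep :: "(real^'m::finite \<Rightarrow> real^'n::finite^'n) \<Rightarrow> bool" where
  "smooth_rep \<rho> \<longleftrightarrow> \<rho> 0 = mat 1 \<and> (\<forall>h h'. \<rho> (h + h') = \<rho> h ** \<rho> h')
      \<and> (\<forall>i j. smooth (\<lambda>h. \<rho> h $ i $ j))"

type_synonym ('m,'n) bivf = "(real^'m) \<times> (real^'n) \<Rightarrow> ('m + 'n) \<Rightarrow> ('m + 'n) \<Rightarrow> real"

definition bivector_field :: "('m::finite,'n::finite) bivf \<Rightarrow> bool" where
  "bivector_field P \<longleftrightarrow> (\<forall>x i j. P x i j = - P x j i) \<and> (\<forall>i j. smooth (\<lambda>x. P x i j))"

definition jac :: "((real^'m::finite) \<times> (real^'n::finite) \<Rightarrow> (real^'m) \<times> (real^'n))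
    \<Rightarrow> (real^'m) \<times> (real^'n) \<Rightarrow> ('m + 'n) \<Rightarrow> ('m + 'n) \<Rightarrow> real" where
  "jac F x a b = pdc b (\<lambda>y. coord a (F y)) x"

definition push :: "((real^'m::finite) \<times> (real^'n::finite) \<Rightarrow> (real^'m) \<times> (real^'n))
    \<Rightarrow> (real^'m) \<times> (real^'n) \<Rightarrow> (('m + 'n) \<Rightarrow> ('m + 'n) \<Rightarrow> real)
    \<Rightarrow> ('m + 'n) \<Rightarrow> ('m + 'n) \<Rightarrow> real" where
  "push F x P a b = (\<Sum>i\<in>UNIV. \<Sum>j\<in>UNIV. jac F x a i * P i j * jac F x b j)"

definition poisson :: "('m::finite,'n::finite) bivf \<Rightarrow> bool" where
  "poisson P \<longleftrightarrow> bivector_field P \<and>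
     (\<forall>x i j k. (\<Sum>l\<in>UNIV. P x i l * pdc l (\<lambda>y. P y j k) x
                          + P x j l * pdc l (\<lambda>y. P y k i) x
                          + P x k l * pdc l (\<lambda>y. P y i j) x) = 0)"

definition multiplicative :: "(real^'m::finite \<Rightarrow> real^'n::finite^'n) \<Rightarrow> ('m,'n) bivf \<Rightarrow> bool" where
  "multiplicative \<rho> P \<longleftrightarrow> (\<forall>g g' a b. P (gmult \<rho> g g') a b =
       push (gmult \<rho> g) g' (P g') a b + push (\<lambda>y. gmult \<rho> y g') g (P g) a b)"

definition left_invariant :: "(real^'m::finite \<Rightarrow> real^'n::finite^'n) \<Rightarrow> ('m,'n) bivf \<Rightarrow> bool" where
  "left_invariant \<rho> X \<longleftrightarrow> (\<forall>g g' a b. X (gmult \<rho> g g') a b = push (gmult \<rho> g) g' (X g') a b)"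

definition right_invariant :: "(real^'m::finite \<Rightarrow> real^'n::finite^'n) \<Rightarrow> ('m,'n) bivf \<Rightarrow> bool" where
  "right_invariant \<rho> X \<longleftrightarrow> (\<forall>g g' a b. X (gmult \<rho> g g') a b = push (\<lambda>y. gmult \<rho> y g') g (X g) a b)"

end

theory Submission
  imports Defs
begin

lemma dirderiv:
  fixes f :: "'a::euclidean_space \<Rightarrow> real"
  assumes "f differentiable (at x)"
  shows "((\<lambda>t. f (x + t *\<^sub>R b)) has_real_derivative pd b f x) (at 0)"
proof -
  have f: "(f has_derivative frechet_derivative f (at x)) (at x)"
    using assms frechet_derivative_works by blast
  have lin: "linear (frechet_derivative f (at x))"
    using f has_derivative_linear by blast
  have g: "((\<lambda>t::real. x + t *\<^sub>R b) has_derivative (\<lambda>t. t *\<^sub>R b)) (at 0)"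
    by (auto intro!: derivative_eq_intros)
  have f0: "(f has_derivative frechet_derivative f (at x)) (at (x + (0::real) *\<^sub>R b))"
    using f by simp
  have "((\<lambda>t. f (x + t *\<^sub>R b)) has_derivative (\<lambda>t. frechet_derivative f (at x) (t *\<^sub>R b))) (at 0)"
    using has_derivative_compose[OF g f0] by simp
  moreover have "(\<lambda>t. frechet_derivative f (at x) (t *\<^sub>R b)) = (*) (pd b f x)"
    using lin by (auto simp: pd_def linear_scale mult.commute)
  ultimately show ?thesis by (simp add: has_field_derivative_def)
qed

lemma shift_one:
  fixes F :: "'a::real_normed_vector \<Rightarrow> 'b::real_normed_vector"
  assumes "\<And>y. F (y + d) = F y + c"
    and "(F has_derivative f') (at (x + d))"
  shows "(F has_derivative f') (at x)"
proof -
  have g: "((\<lambda>y. y + d) has_derivative (\<lambda>y. y + 0)) (at x)"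
    by (rule has_derivative_add[OF has_derivative_ident has_derivative_const])
  have "((\<lambda>y. F (y + d)) has_derivative (\<lambda>y. f' (y + 0))) (at x)"
    by (rule has_derivative_compose[OF g assms(2)])
  then have "((\<lambda>y. F y + c) has_derivative f') (at x)"
    by (simp only: assms(1) add_0_right)
  then have "((\<lambda>y. (F y + c) - c) has_derivative (\<lambda>h. f' h - 0)) (at x)"
    by (rule has_derivative_diff[OF _ has_derivative_const])
  then show ?thesis by (simp only: add_diff_cancel diff_0_right)
qed

lemma frechet_shift:
  fixes F :: "'a::real_normed_vector \<Rightarrow> 'b::real_normed_vector"
  assumes "\<And>y. F (y + d) = F y + c"
  shows "frechet_derivative F (at (x + d)) = frechet_derivative F (at x)"
proof -
  have a2: "F (y + - d) = F y + - c" for y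
  proof -
    have "F y = F ((y + - d) + d)" by simp
    also have "\<dots> = F (y + - d) + c" by (rule assms)
    finally show ?thesis by (simp add: algebra_simps)
  qed
  have eq: "(F has_derivative f') (at (x + d)) \<longleftrightarrow> (F has_derivative f') (at x)" for f'
  proof
    assume "(F has_derivative f') (at (x + d))"
    then show "(F has_derivative f') (at x)" by (rule shift_one[where F=F and d=d and c=c, OF assms])
  next
    assume "(F has_derivative f') (at x)"
    then have "(F has_derivative f') (at ((x + d) + - d))" by simp
    then show "(F has_derivative f') (at (x + d))" by (rule shift_one[where F=F and d="- d" and c="- c", OF a2])
  qed
  show ?thesis unfolding frechet_derivative_def eq ..
qed

lemma frechet_const:
  fixes F :: "'a::real_normed_vector \<Rightarrow> 'b::real_normed_vector"
  shows "frechet_derivative (\<lambda>y. F y + c) (at x) = frechet_derivative F (at x)"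
proof -
  have eq: "((\<lambda>y. F y + c) has_derivative f') (at x) \<longleftrightarrow> (F has_derivative f') (at x)" for f'
  proof
    assume "((\<lambda>y. F y + c) has_derivative f') (at x)"
    then have "((\<lambda>y. (F y + c) - c) has_derivative (\<lambda>h. f' h - 0)) (at x)"
      by (rule has_derivative_diff[OF _ has_derivative_const])
    then show "(F has_derivative f') (at x)" by (simp only: add_diff_cancel diff_0_right)
  next
    assume "(F has_derivative f') (at x)"
    then have "((\<lambda>y. F y + c) has_derivative (\<lambda>h. f' h + 0)) (at x)"
      by (rule has_derivative_add[OF _ has_derivative_const])
    then show "((\<lambda>y. F y + c) has_derivative f') (at x)" by (simp only: add_0_right)
  qed
  show ?thesis unfolding frechet_derivative_def eq ..
qed

lemma coord_add: "coord a (p + q) = coord a p + coord a q"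
  by (cases a) auto

lemma jac_const:
  assumes "\<And>y. G' y = G y + d"
  shows "jac G' x = jac G x"
proof -
  have "\<And>a. (\<lambda>y. coord a (G' y)) = (\<lambda>y. coord a (G y) + coord a d)"
    using assms by (simp add: coord_add)
  then show ?thesis
    by (auto simp: jac_def pdc_def pd_def frechet_const intro!: ext)
qed

lemma jac_shift:
  assumes "\<And>y. G (y + d) = G y + d'"
  shows "jac G (x + d) = jac G x"
proof -
  have "\<And>a y. coord a (G (y + d)) = coord a (G y) + coord a d'"
    using assms by (simp add: coord_add)
  then have "\<And>a. frechet_derivative (\<lambda>y. coord a (G y)) (at (x + d))
      = frechet_derivative (\<lambda>y. coord a (G y)) (at x)"
    by (rule frechet_shift)
  then show ?thesis
    by (intro ext) (simp add: jac_def pdc_def pd_def)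
qed

lemma I1: "snd d = 0 \<Longrightarrow> gmult \<rho> x (y + d) = gmult \<rho> x y + d"
  by (simp add: gmult_def prod_eq_iff add.assoc)

lemma I2: "fst d = 0 \<Longrightarrow> gmult \<rho> (x + d) y = gmult \<rho> x y + d"
  by (simp add: gmult_def prod_eq_iff add.assoc)

lemma smooth_diff: "smooth f \<Longrightarrow> f differentiable (at x)"
  unfolding smooth_def using Ck.simps(2)[of 0 f] by blast

lemma deriv_push:
  fixes J :: "('m::finite + 'n::finite) \<Rightarrow> ('m + 'n) \<Rightarrow> real"
  assumes "\<And>i j. ((\<lambda>t. P t i j) has_real_derivative D i j) (at 0)"
  shows "((\<lambda>t. (\<Sum>i\<in>UNIV. \<Sum>j\<in>UNIV. J a i * P t i j * J b j) + C) has_real_derivative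
     (\<Sum>i\<in>UNIV. \<Sum>j\<in>UNIV. J a i * D i j * J b j)) (at 0)"
proof -
  have "((\<lambda>t. (\<Sum>i\<in>UNIV. \<Sum>j\<in>UNIV. J a i * P t i j * J b j) + C) has_real_derivative
     (\<Sum>i\<in>UNIV. \<Sum>j\<in>UNIV. J a i * D i j * J b j) + 0) (at 0)"
    by (intro DERIV_add DERIV_sum DERIV_const DERIV_cmult DERIV_cmult_right assms)
  then show ?thesis by simp
qed

theorem lemma3:
  fixes \<rho> :: "real^'m::finite \<Rightarrow> real^'n::finite^'n"
    and \<pi> :: "('m,'n) bivf"
  assumes "smooth_rep \<rho>"
    and "poisson \<pi>"
    and "multiplicative \<rho> \<pi>"
  shows "(\<forall>k. left_invariant \<rho> (\<lambda>x i j. pdc (Inl k) (\<lambda>y. \<pi> y i j) x))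
       \<and> (\<forall>l. right_invariant \<rho> (\<lambda>x i j. pdc (Inr l) (\<lambda>y. \<pi> y i j) x))"
proof -
  have diff: "\<And>i j x. (\<lambda>y. \<pi> y i j) differentiable (at x)"
  proof -
    have "bivector_field \<pi>" using assms(2) unfolding poisson_def by blast
    then have "smooth (\<lambda>y. \<pi> y i j)" for i j unfolding bivector_field_def by blast
    then show "\<And>i j x. (\<lambda>y. \<pi> y i j) differentiable (at x)" using smooth_diff by blast
  qed
  have mult: "\<And>g g' a b. \<pi> (gmult \<rho> g g') a b =
       push (gmult \<rho> g) g' (\<pi> g') a b + push (\<lambda>y. gmult \<rho> y g') g (\<pi> g) a b"
    using assms(3) unfolding multiplicative_def by blast
  have L: "left_invariant \<rho> (\<lambda>x i j. pdc (Inl k) (\<lambda>y. \<pi> y i j) x)" for k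
    unfolding left_invariant_def
  proof (intro allI)
    fix g g' :: "(real^'m) \<times> (real^'n)" and a b
    define e :: "(real^'m) \<times> (real^'n)" where "e = cvec (Inl k)"
    have se: "snd (t *\<^sub>R e) = 0" for t by (simp add: e_def)
    define J where "J = jac (gmult \<rho> g) g'"
    define C where "C = push (\<lambda>y. gmult \<rho> y g') g (\<pi> g) a b"
    have eq: "\<pi> (gmult \<rho> g g' + t *\<^sub>R e) a b =
       (\<Sum>i\<in>UNIV. \<Sum>j\<in>UNIV. J a i * \<pi> (g' + t *\<^sub>R e) i j * J b j) + C" for t
    proof -
      have "\<pi> (gmult \<rho> g g' + t *\<^sub>R e) a b = \<pi> (gmult \<rho> g (g' + t *\<^sub>R e)) a b"
        by (simp only: I1[OF se])
      also have "\<dots> = push (gmult \<rho> g) (g' + t *\<^sub>R e) (\<pi> (g' + t *\<^sub>R e)) a b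
          + push (\<lambda>y. gmult \<rho> y (g' + t *\<^sub>R e)) g (\<pi> g) a b" by (rule mult)
      finally have 1: "\<pi> (gmult \<rho> g g' + t *\<^sub>R e) a b = push (gmult \<rho> g) (g' + t *\<^sub>R e) (\<pi> (g' + t *\<^sub>R e)) a b
          + push (\<lambda>y. gmult \<rho> y (g' + t *\<^sub>R e)) g (\<pi> g) a b" .
      have j1: "jac (gmult \<rho> g) (g' + t *\<^sub>R e) = J"
        unfolding J_def by (rule jac_shift, rule I1[OF se])
      have j2: "jac (\<lambda>y. gmult \<rho> y (g' + t *\<^sub>R e)) g = jac (\<lambda>y. gmult \<rho> y g') g"
        by (rule jac_const, rule I1[OF se])
      show ?thesis unfolding 1 push_def C_def j1 j2 by (rule refl)
    qed
    have d1: "((\<lambda>t. \<pi> (gmult \<rho> g g' + t *\<^sub>R e) a b) has_real_derivative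
        pdc (Inl k) (\<lambda>y. \<pi> y a b) (gmult \<rho> g g')) (at 0)"
      unfolding pdc_def e_def by (rule dirderiv[OF diff])
    have d2: "((\<lambda>t. \<pi> (gmult \<rho> g g' + t *\<^sub>R e) a b) has_real_derivative
        (\<Sum>i\<in>UNIV. \<Sum>j\<in>UNIV. J a i * pdc (Inl k) (\<lambda>y. \<pi> y i j) g' * J b j)) (at 0)"
      unfolding eq
      by (rule deriv_push, unfold pdc_def e_def, rule dirderiv[OF diff])
    show "pdc (Inl k) (\<lambda>y. \<pi> y a b) (gmult \<rho> g g') =
      push (gmult \<rho> g) g' (\<lambda>i j. pdc (Inl k) (\<lambda>y. \<pi> y i j) g') a b"
      using DERIV_unique[OF d1 d2] unfolding push_def J_def .
  qed
  have R: "right_invariant \<rho> (\<lambda>x i j. pdc (Inr l) (\<lambda>y. \<pi> y i j) x)" for l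
    unfolding right_invariant_def
  proof (intro allI)
    fix g g' :: "(real^'m) \<times> (real^'n)" and a b
    define e :: "(real^'m) \<times> (real^'n)" where "e = cvec (Inr l)"
    have fe: "fst (t *\<^sub>R e) = 0" for t by (simp add: e_def)
    define J where "J = jac (\<lambda>y. gmult \<rho> y g') g"
    define C where "C = push (gmult \<rho> g) g' (\<pi> g') a b"
    have eq: "\<pi> (gmult \<rho> g g' + t *\<^sub>R e) a b =
       (\<Sum>i\<in>UNIV. \<Sum>j\<in>UNIV. J a i * \<pi> (g + t *\<^sub>R e) i j * J b j) + C" for t
    proof -
      have "\<pi> (gmult \<rho> g g' + t *\<^sub>R e) a b = \<pi> (gmult \<rho> (g + t *\<^sub>R e) g') a b"
        by (simp only: I2[OF fe])
      also have "\<dots> = push (gmult \<rho> (g + t *\<^sub>R e)) g' (\<pi> g') a b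
          + push (\<lambda>y. gmult \<rho> y g') (g + t *\<^sub>R e) (\<pi> (g + t *\<^sub>R e)) a b" by (rule mult)
      finally have 1: "\<pi> (gmult \<rho> g g' + t *\<^sub>R e) a b = push (gmult \<rho> (g + t *\<^sub>R e)) g' (\<pi> g') a b
          + push (\<lambda>y. gmult \<rho> y g') (g + t *\<^sub>R e) (\<pi> (g + t *\<^sub>R e)) a b" .
      have j1: "jac (\<lambda>y. gmult \<rho> y g') (g + t *\<^sub>R e) = J"
        unfolding J_def by (rule jac_shift, rule I2[OF fe])
      have j2: "jac (gmult \<rho> (g + t *\<^sub>R e)) g' = jac (gmult \<rho> g) g'"
        by (rule jac_const, rule I2[OF fe])
      show ?thesis unfolding 1 push_def C_def j1 j2 by (rule add.commute)
    qed
    have d1: "((\<lambda>t. \<pi> (gmult \<rho> g g' + t *\<^sub>R e) a b) has_real_derivative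
        pdc (Inr l) (\<lambda>y. \<pi> y a b) (gmult \<rho> g g')) (at 0)"
      unfolding pdc_def e_def by (rule dirderiv[OF diff])
    have d2: "((\<lambda>t. \<pi> (gmult \<rho> g g' + t *\<^sub>R e) a b) has_real_derivative
        (\<Sum>i\<in>UNIV. \<Sum>j\<in>UNIV. J a i * pdc (Inr l) (\<lambda>y. \<pi> y i j) g * J b j)) (at 0)"
      unfolding eq
      by (rule deriv_push, unfold pdc_def e_def, rule dirderiv[OF diff])
    show "pdc (Inr l) (\<lambda>y. \<pi> y a b) (gmult \<rho> g g') =
      push (\<lambda>y. gmult \<rho> y g') g (\<lambda>i j. pdc (Inr l) (\<lambda>y. \<pi> y i j) g) a b"
      using DERIV_unique[OF d1 d2] unfolding push_def J_def .
  qed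
  show ?thesis using L R by blast
qed

end
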